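(* There exists no generalized matching mechanism that is resolute, symmetric and Pareto optimal.
   Context: Fix $n\ge 2$, $W=\{1,\dots,n\}$ (women), $M=\{n+1,\dots,2n\}$ (men), $I=W\cup M$. Permutations compose right-to-left. A generalized preference profile is a function $\bar p$ on $I$ assigning to each $x\in W$ a linear order $\bar p(x)$ on $M\cup\{x\}$ and to each $y\in M$ a linear order $\bar p(y)$ on $W\cup\{y\}$ (being ranked oneself means being unmatched); $\overline{\mathcal{P}}$ is the set of these. A generalized matching is a permutation $\bar\mu$ of $I$ such that for $x\in W$, $\bar\mu(x)\ne x$ implies $\bar\mu(x)\in M$; for $y\in M$, $\bar\mu(y)\neq y$ implies $\bar\mu(y)\in W$; and $\bar\mu(\bar\mu(z))=z$ for all $z$; $\overline{\mathcal{M}}$ is the set of these. $\bar\mu$ is Pareto optimal for $\bar p$ if there is no $\bar\mu'\in\overline{\mathcal{M}}$ with $\bar\mu'(z)\succeq_{\bar p(z)}\bar\mu(z)$ for all $z\in I$ and $\bar\mu'(z^* )\succ_{\bar p(z^* )}\bar\mu(z^* )$ for some $z^*$. Let $G^*=\{\varphi\in\mathrm{Sym}(I):\{\varphi(W),\varphi(M)\}=\{W,M\}\}$. For a linear order $R$ on $X\subseteq I$ and $\varphi\in\mathrm{Sym}(I)$, $\varphi R$ is the relation on $\varphi(X)$ with $(a,b)\in\varphi R$ iff $(\varphi^{-1}(a),\varphi^{-1}(b))\in R$. For $\varphi\in G^*$, $\bar p^\varphi(z)=\varphi\,\bar p(\varphi^{-1}(z))$; for a permutation $\mu$, $\mu^\varphi=\varphi\mu\varphi^{-1}$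 and $S^\varphi=\{\mu^\varphi:\mu\in S\}$. A generalized matching mechanism is a correspondence $F$ from $\overline{\mathcal{P}}$ to $\overline{\mathcal{M}}$; it is resolute if $|F(\bar p)|=1$ for all $\bar p$; Pareto optimal if all elements of $F(\bar p)$ are Pareto optimal for $\bar p$, for all $\bar p$; symmetric if $F(\bar p^\varphi)=F(\bar p)^\varphi$ for all $\bar p\in\overline{\mathcal{P}}$, $\varphi\in G^*$. *)

theory Defs
  imports Main
begin

text \<open>A linear order R on a set X is a relation with linear_order_on X R;
  convention: (a,b) \<in> R means a is ranked weakly above b (a is weakly preferred to b).\<close>

definition women :: "nat \<Rightarrow> nat set" where "women n = {1..n}"
definition men :: "nat \<Rightarrow> nat set" where "men n = {n+1..2*n}"
definition agents :: "nat \<Rightarrow> nat set" where "agents n = women n \<union> men n"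

definition perm_of :: "nat \<Rightarrow> (nat \<Rightarrow> nat) \<Rightarrow> bool" where
  "perm_of n \<phi> \<longleftrightarrow> bij_betw \<phi> (agents n) (agents n) \<and> (\<forall>z. z \<notin> agents n \<longrightarrow> \<phi> z = z)"

definition gen_profiles :: "nat \<Rightarrow> (nat \<Rightarrow> nat rel) set" where
  "gen_profiles n = {p.
     (\<forall>x\<in>women n. linear_order_on (men n \<union> {x}) (p x)) \<and>
     (\<forall>y\<in>men n. linear_order_on (women n \<union> {y}) (p y)) \<and>
     (\<forall>z. z \<notin> agents n \<longrightarrow> p z = {})}"

definition gen_matchings :: "nat \<Rightarrow> (nat \<Rightarrow> nat) set" where
  "gen_matchings n = {\<mu>. perm_of n \<mu> \<and>
     (\<forall>x\<in>women n. \<mu> x \<noteq> x \<longrightarrow> \<mu> x \<in> men n) \<and>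
     (\<forall>y\<in>men n. \<mu> y \<noteq> y \<longrightarrow> \<mu> y \<in> women n) \<and>
     (\<forall>z\<in>agents n. \<mu> (\<mu> z) = z)}"

definition weakly_pref :: "nat rel \<Rightarrow> nat \<Rightarrow> nat \<Rightarrow> bool" where
  "weakly_pref R a b \<longleftrightarrow> (a, b) \<in> R"

definition strictly_pref :: "nat rel \<Rightarrow> nat \<Rightarrow> nat \<Rightarrow> bool" where
  "strictly_pref R a b \<longleftrightarrow> (a, b) \<in> R \<and> a \<noteq> b"

definition pareto_optimal :: "nat \<Rightarrow> (nat \<Rightarrow> nat rel) \<Rightarrow> (nat \<Rightarrow> nat) \<Rightarrow> bool" where
  "pareto_optimal n p \<mu> \<longleftrightarrow> \<mu> \<in> gen_matchings n \<and>
     \<not> (\<exists>\<mu>'\<in>gen_matchings n. (\<forall>z\<in>agents n. weakly_pref (p z) (\<mu>' z) (\<mu> z)) \<and>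
                               (\<exists>z\<in>agents n. strictly_pref (p z) (\<mu>' z) (\<mu> z)))"

definition Gstar :: "nat \<Rightarrow> (nat \<Rightarrow> nat) set" where
  "Gstar n = {\<phi>. perm_of n \<phi> \<and> {\<phi> ` women n, \<phi> ` men n} = {women n, men n}}"

definition rel_image :: "(nat \<Rightarrow> nat) \<Rightarrow> nat rel \<Rightarrow> nat rel" where
  "rel_image \<phi> R = (\<lambda>(a, b). (\<phi> a, \<phi> b)) ` R"

definition profile_perm :: "(nat \<Rightarrow> nat rel) \<Rightarrow> (nat \<Rightarrow> nat) \<Rightarrow> (nat \<Rightarrow> nat rel)" where
  "profile_perm p \<phi> = (\<lambda>z. rel_image \<phi> (p (inv \<phi> z)))"

definition matching_perm :: "(nat \<Rightarrow> nat) \<Rightarrow> (nat \<Rightarrow> nat) \<Rightarrow> (nat \<Rightarrow> nat)" where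
  "matching_perm \<mu> \<phi> = \<phi> \<circ> \<mu> \<circ> inv \<phi>"

definition gen_mechanism :: "nat \<Rightarrow> ((nat \<Rightarrow> nat rel) \<Rightarrow> (nat \<Rightarrow> nat) set) \<Rightarrow> bool" where
  "gen_mechanism n F \<longleftrightarrow> (\<forall>p\<in>gen_profiles n. F p \<subseteq> gen_matchings n)"

definition resolute :: "nat \<Rightarrow> ((nat \<Rightarrow> nat rel) \<Rightarrow> (nat \<Rightarrow> nat) set) \<Rightarrow> bool" where
  "resolute n F \<longleftrightarrow> (\<forall>p\<in>gen_profiles n. card (F p) = 1)"

definition pareto_optimal_mech :: "nat \<Rightarrow> ((nat \<Rightarrow> nat rel) \<Rightarrow> (nat \<Rightarrow> nat) set) \<Rightarrow> bool" where
  "pareto_optimal_mech n F \<longleftrightarrow> (\<forall>p\<in>gen_profiles n. \<forall>\<mu>\<in>F p. pareto_optimal n p \<mu>)"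

definition symmetric :: "nat \<Rightarrow> ((nat \<Rightarrow> nat rel) \<Rightarrow> (nat \<Rightarrow> nat) set) \<Rightarrow> bool" where
  "symmetric n F \<longleftrightarrow> (\<forall>p\<in>gen_profiles n. \<forall>\<phi>\<in>Gstar n.
      F (profile_perm p \<phi>) = (\<lambda>\<mu>. matching_perm \<mu> \<phi>) ` F p)"

end

theory Submission
  imports Defs
begin

definition posn :: "nat \<Rightarrow> nat \<Rightarrow> nat" where
  "posn n z = (if z \<le> n then 2*(z-1) else 2*(z-n)-1)"

definition phi :: "nat \<Rightarrow> nat \<Rightarrow> nat" where
  "phi n z = (if 1 \<le> z \<and> z \<le> n then z + n else if n < z \<and> z < 2*n then z - n + 1
     else if z = 2*n \<and> 0 < n then 1 else z)"

definition psi :: "nat \<Rightarrow> nat \<Rightarrow> nat" where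
  "psi n z = (if 2 \<le> z \<and> z \<le> n then z + n - 1 else if z = 1 \<and> 0 < n then 2*n
     else if n < z \<and> z \<le> 2*n then z - n else z)"

definition subm :: "nat \<Rightarrow> nat \<Rightarrow> nat \<Rightarrow> nat" where
  "subm N a b = (if b \<le> a then a - b else a + N - b)"

definition addm :: "nat \<Rightarrow> nat \<Rightarrow> nat \<Rightarrow> nat" where
  "addm N a b = (if a + b < N then a + b else a + b - N)"

definition Kr :: "nat \<Rightarrow> nat \<Rightarrow> nat \<Rightarrow> nat" where
  "Kr n z x = (if x = z then 2*n else addm (2*n) (subm (2*n) (posn n x) (posn n z)) (n-1))"

definition Sset :: "nat \<Rightarrow> nat \<Rightarrow> nat set" where
  "Sset n z = (if z \<in> women n then men n else women n) \<union> {z}"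

definition prof :: "nat \<Rightarrow> nat \<Rightarrow> nat rel" where
  "prof n z = (if z \<in> agents n then {(x,y). x \<in> Sset n z \<and> y \<in> Sset n z \<and> Kr n z x \<le> Kr n z y} else {})"

definition nu :: "nat \<Rightarrow> nat \<Rightarrow> nat" where
  "nu n z = (if z \<in> women n then z + n else if z \<in> men n then z - n else z)"

lemma mem_simps:
  "z \<in> women n \<longleftrightarrow> 1 \<le> z \<and> z \<le> n"
  "z \<in> men n \<longleftrightarrow> n < z \<and> z \<le> 2*n"
  "z \<in> agents n \<longleftrightarrow> 1 \<le> z \<and> z \<le> 2*n"
  by (auto simp: women_def men_def agents_def)

lemma lin_key:
  fixes g :: "nat \<Rightarrow> nat"
  assumes "inj_on g A"
  shows "linear_order_on A {(x,y). x \<in> A \<and> y \<in> A \<and> g x \<le> g y}"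
  using assms
  unfolding linear_order_on_def partial_order_on_def preorder_on_def refl_on_def trans_def
    antisym_def total_on_def
  by (auto dest: inj_onD)

lemma rel_image_key:
  assumes "\<And>x. x \<in> A \<Longrightarrow> g x = h (f x)"
  shows "rel_image f {(x,y). x \<in> A \<and> y \<in> A \<and> g x \<le> g y}
       = {(u,v). u \<in> f ` A \<and> v \<in> f ` A \<and> h u \<le> h v}"
  using assms unfolding rel_image_def by (auto simp: image_iff)

lemma psi_phi: "1 \<le> n \<Longrightarrow> psi n (phi n z) = z"
  by (auto simp: phi_def psi_def)

lemma phi_psi: "1 \<le> n \<Longrightarrow> phi n (psi n z) = z"
  by (auto simp: phi_def psi_def)

lemma inv_phi: "1 \<le> n \<Longrightarrow> inv (phi n) = psi n"
  by (rule inv_equality) (auto simp: psi_phi phi_psi)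

lemma phi_w: "1 \<le> n \<Longrightarrow> z \<in> women n \<Longrightarrow> phi n z \<in> men n"
  by (auto simp: phi_def mem_simps)
lemma phi_m: "1 \<le> n \<Longrightarrow> z \<in> men n \<Longrightarrow> phi n z \<in> women n"
  by (auto simp: phi_def mem_simps)
lemma psi_w: "1 \<le> n \<Longrightarrow> z \<in> women n \<Longrightarrow> psi n z \<in> men n"
  by (auto simp: psi_def mem_simps)
lemma psi_m: "1 \<le> n \<Longrightarrow> z \<in> men n \<Longrightarrow> psi n z \<in> women n"
  by (auto simp: psi_def mem_simps)
lemma phi_out: "z \<notin> agents n \<Longrightarrow> phi n z = z"
  by (auto simp: phi_def mem_simps)
lemma psi_out: "z \<notin> agents n \<Longrightarrow> psi n z = z"
  by (auto simp: psi_def mem_simps)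

lemma phi_img_w: "1 \<le> n \<Longrightarrow> phi n ` women n = men n"
  using phi_w psi_m phi_psi by (metis image_subsetI subsetI subset_antisym rev_image_eqI)
lemma phi_img_m: "1 \<le> n \<Longrightarrow> phi n ` men n = women n"
  using phi_m psi_w phi_psi by (metis image_subsetI subsetI subset_antisym rev_image_eqI)

lemma agents_un: "agents n = women n \<union> men n" by (simp add: agents_def)

lemma phi_Gstar: "1 \<le> n \<Longrightarrow> phi n \<in> Gstar n"
proof -
  assume n: "1 \<le> n"
  have "bij_betw (phi n) (agents n) (agents n)"
    apply (rule bij_betw_byWitness[where f'="psi n"])
    using n psi_phi phi_psi phi_w phi_m psi_w psi_m by (auto simp: agents_un)
  then show ?thesis using n phi_out phi_img_w phi_img_m
    by (auto simp: Gstar_def perm_of_def)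
qed


lemma posn_lt: "z \<in> agents n \<Longrightarrow> posn n z < 2*n"
  by (auto simp: posn_def mem_simps)

lemma posn_inj: "x \<in> agents n \<Longrightarrow> z \<in> agents n \<Longrightarrow> posn n x = posn n z \<Longrightarrow> x = z"
  unfolding posn_def mem_simps by (auto split: if_splits; presburger)

lemma posn_phi: "1 \<le> n \<Longrightarrow> z \<in> agents n \<Longrightarrow> posn n (phi n z) = addm (2*n) (posn n z) 1"
  by (auto simp: posn_def phi_def addm_def mem_simps)

lemma posn_1: "1 \<le> n \<Longrightarrow> posn n (Suc 0) = 0" by (simp add: posn_def)

lemma phi_agents: "1 \<le> n \<Longrightarrow> z \<in> agents n \<Longrightarrow> phi n z \<in> agents n"
  using phi_w phi_m agents_un by blast
lemma psi_agents: "1 \<le> n \<Longrightarrow> z \<in> agents n \<Longrightarrow> psi n z \<in> agents n"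
  using psi_w psi_m agents_un by blast

lemma subm_lt: "a < N \<Longrightarrow> b < N \<Longrightarrow> subm N a b < N" by (auto simp: subm_def)
lemma addm_lt: "a < N \<Longrightarrow> b < N \<Longrightarrow> addm N a b < N" by (auto simp: addm_def)
lemma subm_inj: "a < N \<Longrightarrow> a' < N \<Longrightarrow> b < N \<Longrightarrow> subm N a b = subm N a' b \<Longrightarrow> a = a'"
  by (auto simp: subm_def split: if_splits)
lemma addm_inj: "a < N \<Longrightarrow> a' < N \<Longrightarrow> b < N \<Longrightarrow> addm N a b = addm N a' b \<Longrightarrow> a = a'"
  by (auto simp: addm_def split: if_splits)
lemma subm_shift: "a < N \<Longrightarrow> b < N \<Longrightarrow> subm N (addm N a 1) (addm N b 1) = subm N a b"
  by (auto simp: subm_def addm_def)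

lemma Sset_agents: "z \<in> agents n \<Longrightarrow> Sset n z \<subseteq> agents n"
  by (auto simp: Sset_def agents_un)

lemma Kr_inj: "1 \<le> n \<Longrightarrow> z \<in> agents n \<Longrightarrow> inj_on (Kr n z) (Sset n z)"
proof (rule inj_onI)
  fix x y assume n: "1 \<le> n" and z: "z \<in> agents n" and x: "x \<in> Sset n z" and y: "y \<in> Sset n z"
    and e: "Kr n z x = Kr n z y"
  have xa: "x \<in> agents n" and ya: "y \<in> agents n" using x y Sset_agents[OF z] by auto
  have px: "posn n x < 2*n" and py: "posn n y < 2*n" and pz: "posn n z < 2*n"
    using xa ya z posn_lt by auto
  have lx: "addm (2*n) (subm (2*n) (posn n x) (posn n z)) (n-1) < 2*n"
    using px pz n by (intro addm_lt subm_lt) auto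
  have ly: "addm (2*n) (subm (2*n) (posn n y) (posn n z)) (n-1) < 2*n"
    using py pz n by (intro addm_lt subm_lt) auto
  show "x = y"
  proof (cases "x = z \<or> y = z")
    case True
    then show ?thesis using e lx ly by (auto simp: Kr_def split: if_splits)
  next
    case False
    then have "addm (2*n) (subm (2*n) (posn n x) (posn n z)) (n-1)
             = addm (2*n) (subm (2*n) (posn n y) (posn n z)) (n-1)" using e by (simp add: Kr_def)
    then have "subm (2*n) (posn n x) (posn n z) = subm (2*n) (posn n y) (posn n z)"
      using addm_inj[OF subm_lt[OF px pz] subm_lt[OF py pz], of "n-1"] n by fastforce
    then have "posn n x = posn n y" using subm_inj[OF px py pz] by simp
    then show ?thesis using posn_inj xa ya by blast
  qed
qed

lemma prof_in: "1 \<le> n \<Longrightarrow> prof n \<in> gen_profiles n"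
proof -
  assume n: "1 \<le> n"
  have A: "\<And>z. z \<in> agents n \<Longrightarrow> linear_order_on (Sset n z) (prof n z)"
    unfolding prof_def using Kr_inj[OF n] lin_key by simp
  have W: "\<And>z. z \<in> women n \<Longrightarrow> Sset n z = men n \<union> {z}" by (simp add: Sset_def)
  have M: "\<And>z. z \<in> men n \<Longrightarrow> Sset n z = women n \<union> {z}" using n by (auto simp: Sset_def mem_simps)
  have "\<forall>x\<in>women n. linear_order_on (men n \<union> {x}) (prof n x)"
    using A W by (metis UnCI agents_un)
  moreover have "\<forall>x\<in>men n. linear_order_on (women n \<union> {x}) (prof n x)"
    using A M by (metis UnCI agents_un)
  moreover have "\<forall>z. z \<notin> agents n \<longrightarrow> prof n z = {}" by (simp add: prof_def)
  ultimately show ?thesis unfolding gen_profiles_def by blast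
qed

lemma Sset_img: "1 \<le> n \<Longrightarrow> z \<in> agents n \<Longrightarrow> phi n ` Sset n (psi n z) = Sset n z"
proof -
  assume n: "1 \<le> n" and z: "z \<in> agents n"
  have disj: "women n \<inter> men n = {}" by (auto simp: mem_simps)
  show ?thesis
  proof (cases "z \<in> women n")
    case True
    then have "psi n z \<in> men n" using psi_w n by blast
    then have "psi n z \<notin> women n" using disj by blast
    then show ?thesis using True n phi_img_w phi_psi by (simp add: Sset_def)
  next
    case False
    then have zm: "z \<in> men n" using z agents_un by blast
    then have "psi n z \<in> women n" using psi_m n by blast
    then show ?thesis using False n phi_img_m phi_psi by (simp add: Sset_def)
  qed
qed

lemma prof_inv: "1 \<le> n \<Longrightarrow> profile_perm (prof n) (phi n) = prof n"
proof (rule ext)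
  fix z assume n: "1 \<le> n"
  show "profile_perm (prof n) (phi n) z = prof n z"
  proof (cases "z \<in> agents n")
    case False
    then show ?thesis using n by (simp add: profile_perm_def inv_phi psi_out prof_def rel_image_def)
  next
    case True
    let ?w = "psi n z"
    have w: "?w \<in> agents n" using psi_agents n True by blast
    have key: "Kr n ?w x = Kr n z (phi n x)" if x: "x \<in> Sset n ?w" for x
    proof -
      have xa: "x \<in> agents n" using x Sset_agents[OF w] by auto
      show ?thesis
      proof (cases "x = ?w")
        case True then show ?thesis using n phi_psi by (simp add: Kr_def)
      next
        case False
        then have "phi n x \<noteq> z" using psi_phi n by metis
        moreover have "posn n z = addm (2*n) (posn n ?w) 1"
          using posn_phi[OF n w] phi_psi n by simp
        ultimately show ?thesis using False posn_phi[OF n xa] subm_shift posn_lt xa w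
          by (simp add: Kr_def)
      qed
    qed
    have "profile_perm (prof n) (phi n) z = rel_image (phi n) (prof n ?w)"
      using n by (simp add: profile_perm_def inv_phi)
    also have "\<dots> = {(u,v). u \<in> phi n ` Sset n ?w \<and> v \<in> phi n ` Sset n ?w \<and> Kr n z u \<le> Kr n z v}"
      using w key by (simp add: prof_def rel_image_key)
    also have "\<dots> = prof n z" using Sset_img[OF n True] True by (simp add: prof_def)
    finally show ?thesis .
  qed
qed


lemma nu_match: "1 \<le> n \<Longrightarrow> nu n \<in> gen_matchings n"
proof -
  assume n: "1 \<le> n"
  have nn: "\<And>z. z \<in> agents n \<Longrightarrow> nu n (nu n z) = z" by (auto simp: nu_def mem_simps)
  have na: "\<And>z. z \<in> agents n \<Longrightarrow> nu n z \<in> agents n" by (auto simp: nu_def mem_simps)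
  have "bij_betw (nu n) (agents n) (agents n)"
    by (rule bij_betw_byWitness[where f'="nu n"]) (use nn na in auto)
  moreover have "\<forall>z. z \<notin> agents n \<longrightarrow> nu n z = z" by (auto simp: nu_def mem_simps)
  moreover have "\<forall>x\<in>women n. nu n x \<noteq> x \<longrightarrow> nu n x \<in> men n" by (auto simp: nu_def mem_simps)
  moreover have "\<forall>x\<in>men n. nu n x \<noteq> x \<longrightarrow> nu n x \<in> women n" by (auto simp: nu_def mem_simps)
  ultimately show ?thesis using nn by (simp add: gen_matchings_def perm_of_def)
qed

lemma nu_S: "1 \<le> n \<Longrightarrow> z \<in> agents n \<Longrightarrow> nu n z \<in> Sset n z"
  by (auto simp: nu_def Sset_def mem_simps)

lemma nu_K: "2 \<le> n \<Longrightarrow> z \<in> agents n \<Longrightarrow> Kr n z (nu n z) < 2*n - 1"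
proof (cases "z \<le> n")
  case True
  assume n: "2 \<le> n" and z: "z \<in> agents n"
  have z1: "1 \<le> z" using z by (simp add: mem_simps)
  have nz: "nu n z = z + n" using True z1 by (simp add: nu_def mem_simps)
  have p1: "posn n (z + n) = 2*z - 1" using z1 by (simp add: posn_def)
  have p2: "posn n z = 2*z - 2" using True by (simp add: posn_def)
  have s: "subm (2*n) (2*z - 1) (2*z - 2) = 1" using z1 by (simp add: subm_def)
  have a: "addm (2*n) 1 (n-1) = n" using n by (simp add: addm_def)
  have "Kr n z (nu n z) = n" using nz p1 p2 s a n by (simp add: Kr_def)
  then show ?thesis using n by simp
next
  case False
  assume n: "2 \<le> n" and z: "z \<in> agents n"
  have z1: "z \<le> 2*n" using z by (simp add: mem_simps)
  have nz: "nu n z = z - n" using False z1 by (simp add: nu_def mem_simps)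
  have p1: "posn n (z - n) = 2*(z-n) - 2" using False z1 unfolding posn_def by (simp, arith)
  have p2: "posn n z = 2*(z-n) - 1" using False by (simp add: posn_def)
  have s: "subm (2*n) (2*(z-n) - 2) (2*(z-n) - 1) = 2*n - 1" using False by (simp add: subm_def)
  have a: "addm (2*n) (2*n-1) (n-1) = n - 2" using n by (simp add: addm_def)
  have ne: "z - n \<noteq> z" using False n by simp
  have "Kr n z (nu n z) = n - 2" using nz p1 p2 s a ne by (simp add: Kr_def)
  then show ?thesis using n by simp
qed

lemma not_PO:
  assumes n: "2 \<le> n" and mu: "\<mu> \<in> gen_matchings n" and fxp: "\<mu> = matching_perm \<mu> (phi n)"
  shows "\<not> pareto_optimal n (prof n) \<mu>"
proof
  assume po: "pareto_optimal n (prof n) \<mu>"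
  have n1: "1 \<le> n" using n by simp
  have comm: "\<mu> (phi n z) = phi n (\<mu> z)" for z
  proof -
    have "\<mu> (phi n z) = matching_perm \<mu> (phi n) (phi n z)" using fxp by simp
    also have "\<dots> = phi n (\<mu> z)" using n1 by (simp add: matching_perm_def inv_phi psi_phi)
    finally show ?thesis .
  qed
  have bij: "bij_betw \<mu> (agents n) (agents n)" using mu by (simp add: gen_matchings_def perm_of_def)
  have ma: "\<And>z. z \<in> agents n \<Longrightarrow> \<mu> z \<in> agents n" using bij bij_betwE by blast
  have invol: "\<And>z. z \<in> agents n \<Longrightarrow> \<mu> (\<mu> z) = z" using mu by (simp add: gen_matchings_def)
  define d where "d z = subm (2*n) (posn n (\<mu> z)) (posn n z)" for z
  have dphi: "d (phi n z) = d z" if z: "z \<in> agents n" for z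
    unfolding d_def comm using posn_phi[OF n1 z] posn_phi[OF n1 ma[OF z]] subm_shift posn_lt z ma
    by simp
  have dw: "d i = d 1" if "1 \<le> i" "i \<le> n" for i
    using that
  proof (induction i)
    case 0 then show ?case by simp
  next
    case (Suc i)
    show ?case
    proof (cases "i = 0")
      case True then show ?thesis by simp
    next
      case False
      have ia: "i \<in> agents n" using False Suc by (simp add: mem_simps)
      have pa: "phi n i \<in> agents n" using phi_agents[OF n1 ia] .
      have "Suc i = phi n (phi n i)" using False Suc by (simp add: phi_def)
      then have "d (Suc i) = d i" using dphi ia pa by simp
      moreover have "d i = d 1" using Suc.IH Suc.prems False by simp
      ultimately show ?thesis by simp
    qed
  qed
  have dall: "d z = d 1" if z: "z \<in> agents n" for z
  proof (cases "z \<le> n")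
    case True
    have "1 \<le> z" using z by (simp add: mem_simps)
    then show ?thesis using True by (rule dw)
  next
    case False
    define w where "w = z - n"
    have zw: "w \<in> agents n" using False z unfolding mem_simps w_def by arith
    have w1: "1 \<le> w" "w \<le> n" using z False unfolding mem_simps w_def by arith+
    have e: "z = phi n w" using False z n unfolding phi_def mem_simps w_def by (simp, arith)
    have "d z = d w" using dphi[OF zw] e by simp
    moreover have "d w = d 1" using w1 by (rule dw)
    ultimately show ?thesis by simp
  qed
  have one: "1 \<in> agents n" using n by (simp add: mem_simps)
  define m where "m = \<mu> 1"
  have m: "m \<in> agents n" using ma one m_def by simp
  have d1: "d 1 = posn n m" using n1 by (simp add: d_def m_def posn_1 subm_def)
  have "d m = subm (2*n) 0 (posn n m)" using invol[OF one] n1 by (simp add: d_def m_def posn_1)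
  then have "subm (2*n) 0 (posn n m) = posn n m" using dall[OF m] d1 by simp
  then have d0: "d 1 = 0 \<or> d 1 = n" using d1 posn_lt[OF m] by (auto simp: subm_def split: if_splits)
  have Kmu: "Kr n z (\<mu> z) \<ge> 2*n - 1" if z: "z \<in> agents n" for z
  proof (cases "\<mu> z = z")
    case True then show ?thesis by (simp add: Kr_def)
  next
    case False
    then have "posn n (\<mu> z) \<noteq> posn n z" using posn_inj ma z by metis
    then have "d z \<noteq> 0" using posn_lt[OF z] posn_lt[OF ma[OF z]] by (auto simp: d_def subm_def)
    then have "d z = n" using dall[OF z] d0 by simp
    then show ?thesis using False n by (simp add: Kr_def d_def addm_def, arith)
  qed
  have muS: "\<mu> z \<in> Sset n z" if z: "z \<in> agents n" for z
    using mu z by (auto simp: gen_matchings_def Sset_def agents_un)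
  have better: "(nu n z, \<mu> z) \<in> prof n z \<and> nu n z \<noteq> \<mu> z" if z: "z \<in> agents n" for z
  proof -
    have "Kr n z (nu n z) < Kr n z (\<mu> z)" using nu_K[OF n z] Kmu[OF z] by simp
    then show ?thesis using z nu_S[OF n1 z] muS[OF z] by (auto simp: prof_def)
  qed
  have "\<exists>\<mu>'\<in>gen_matchings n. (\<forall>z\<in>agents n. weakly_pref (prof n z) (\<mu>' z) (\<mu> z)) \<and>
                               (\<exists>z\<in>agents n. strictly_pref (prof n z) (\<mu>' z) (\<mu> z))"
    using nu_match[OF n1] better one by (auto simp: weakly_pref_def strictly_pref_def)
  then show False using po by (simp add: pareto_optimal_def)
qed

theorem theorem9:
  fixes n :: nat
  assumes "n \<ge> 2"
  shows "\<not> (\<exists>F. gen_mechanism n F \<and> resolute n F \<and> symmetric n F \<and> pareto_optimal_mech n F)"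
proof
  assume "\<exists>F. gen_mechanism n F \<and> resolute n F \<and> symmetric n F \<and> pareto_optimal_mech n F"
  then obtain F where g: "gen_mechanism n F" and r: "resolute n F" and s: "symmetric n F"
    and po: "pareto_optimal_mech n F" by blast
  have n1: "1 \<le> n" using assms by simp
  have p: "prof n \<in> gen_profiles n" using prof_in[OF n1] .
  have "card (F (prof n)) = 1" using r p by (simp add: resolute_def)
  then obtain \<mu> where F1: "F (prof n) = {\<mu>}" using card_1_singletonE by blast
  have "F (profile_perm (prof n) (phi n)) = (\<lambda>\<mu>. matching_perm \<mu> (phi n)) ` F (prof n)"
    using s p phi_Gstar[OF n1] by (simp add: symmetric_def)
  then have "{\<mu>} = {matching_perm \<mu> (phi n)}" using F1 prof_inv[OF n1] by simp
  then have fx: "\<mu> = matching_perm \<mu> (phi n)" by simp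
  have "\<mu> \<in> gen_matchings n" using g p F1 by (auto simp: gen_mechanism_def)
  moreover have "pareto_optimal n (prof n) \<mu>" using po p F1 by (simp add: pareto_optimal_mech_def)
  ultimately show False using not_PO[OF assms _ fx] by blast
qed

end
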